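(* With the mesh and coefficients $a^{(n)}_{n-k}$ as in the context (in particular $\tau_{n-1}\le\tau_n$), define for $1\le j\le k\le N$: $\zeta^{(k)}_0=a^{(k)}_0$ and $\zeta^{(k)}_{k-j}=a^{(k)}_{k-j}-a^{(k)}_{k-j-1}$ for $j<k$. Then for every $1\le n\le N$ and every real sequence $w_1,\dots,w_n$, $$\sum_{k=1}^n w_k\sum_{j=1}^k\zeta^{(k)}_{k-j}w_j\;\ge\;\frac12\sum_{k=1}^{n-1}\big(a^{(k)}_0-a^{(k+1)}_0\big)w_k^2\;\ge\;0 .$$
   Context: Fix $T>0$, $0<\alpha<1$ and a mesh $0=t_0<t_1<\dots<t_N=T$ with step sizes $\tau_n=t_n-t_{n-1}$ satisfying $\tau_{n-1}\le\tau_n$ for $2\le n\le N$. Set $t_{-1/2}=t_0$, $t_{n-1/2}=t_{n-1}+\tau_n/2$ for $1\le n\le N$, $\tau_{1/2}=\tau_1/2$ and $\tau_{n-1/2}=(\tau_n+\tau_{n-1})/2$ for $n\ge 2$. Let $\omega_\gamma(t)=t^{\gamma-1}/\Gamma(\gamma)$ for $t>0$. For $1\le n\le N$ and $1\le k\le n$ define $$a^{(n)}_{n-k}=\frac{1}{\tau_{k-1/2}}\int_{t_{k-3/2}}^{t_{k-1/2}}\omega_{1-\alpha}(t_{n-1/2}-s)\,ds .$$ *)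

theory Defs
  imports "HOL-Analysis.Analysis"
begin

definition omega :: "real \<Rightarrow> real \<Rightarrow> real" where
  "omega \<gamma> t = t powr (\<gamma> - 1) / Gamma \<gamma>"

definition tau :: "(nat \<Rightarrow> real) \<Rightarrow> nat \<Rightarrow> real" where
  "tau t n = t n - t (n - 1)"

text \<open>tmid t m represents t_(m-1/2): t_(-1/2) = t_0, t_(m-1/2) = t_(m-1) + tau_m/2 for m >= 1.\<close>
definition tmid :: "(nat \<Rightarrow> real) \<Rightarrow> nat \<Rightarrow> real" where
  "tmid t m = (if m = 0 then t 0 else t (m - 1) + tau t m / 2)"

text \<open>tauh t k represents tau_(k-1/2): tau_(1/2) = tau_1/2, tau_(k-1/2) = (tau_k + tau_(k-1))/2 for k >= 2.\<close>
definition tauh :: "(nat \<Rightarrow> real) \<Rightarrow> nat \<Rightarrow> real" where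
  "tauh t k = (if k = 1 then tau t 1 / 2 else (tau t k + tau t (k - 1)) / 2)"

text \<open>acoef \<alpha> t n k represents a^(n)_(n-k), for 1 <= k <= n.\<close>
definition acoef :: "real \<Rightarrow> (nat \<Rightarrow> real) \<Rightarrow> nat \<Rightarrow> nat \<Rightarrow> real" where
  "acoef \<alpha> t n k = (1 / tauh t k) *
     integral {tmid t (k - 1)..tmid t k} (\<lambda>s. omega (1 - \<alpha>) (tmid t n - s))"

text \<open>zeta \<alpha> t k j represents zeta^(k)_(k-j), for 1 <= j <= k:
  zeta^(k)_0 = a^(k)_0 and zeta^(k)_(k-j) = a^(k)_(k-j) - a^(k)_(k-j-1) for j < k.\<close>
definition zeta :: "real \<Rightarrow> (nat \<Rightarrow> real) \<Rightarrow> nat \<Rightarrow> nat \<Rightarrow> real" where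
  "zeta \<alpha> t k j = (if j = k then acoef \<alpha> t k k else acoef \<alpha> t k j - acoef \<alpha> t k (j + 1))"

end

theory Submission
  imports Defs
begin


lemma int_formula:
  fixes \<alpha> A B c :: real
  assumes "A \<le> B" "B \<le> c" "0 < \<alpha>" "\<alpha> < 1"
  shows "integral {A..B} (\<lambda>s. omega (1-\<alpha>) (c - s)) =
    ((c-A) powr (1-\<alpha>) - (c-B) powr (1-\<alpha>)) / ((1-\<alpha>) * Gamma (1-\<alpha>))"
proof -
  define Fp where "Fp = (\<lambda>s::real. -((c-s) powr (1-\<alpha>)) / ((1-\<alpha>) * Gamma (1-\<alpha>)))"
  have G: "Gamma (1-\<alpha>) > 0" using assms by simp
  have cont: "continuous_on {A..B} Fp"
  proof -
    have "continuous_on {A..B} (\<lambda>s. (c-s) powr (1-\<alpha>))"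
      by (rule continuous_on_powr') (use assms in \<open>auto intro!: continuous_intros\<close>)
    then show ?thesis unfolding Fp_def using G by (auto intro!: continuous_intros)
  qed
  have der: "(Fp has_vector_derivative omega (1-\<alpha>) (c - x)) (at x)" if "x \<in> {A<..<B}" for x
  proof -
    have pos: "c - x > 0" using that assms by auto
    have "((\<lambda>s. (c-s) powr (1-\<alpha>)) has_real_derivative (1-\<alpha>) * (c-x) powr ((1-\<alpha>) - 1) * (-1)) (at x)"
      by (rule DERIV_chain2[where f="\<lambda>z. z powr (1-\<alpha>)" and g="\<lambda>s. c - s", OF has_real_derivative_powr[OF pos]]) (auto intro!: derivative_eq_intros)
    then have "(Fp has_real_derivative - ((1-\<alpha>) * (c-x) powr ((1-\<alpha>) - 1) * (-1)) / ((1-\<alpha>) * Gamma (1-\<alpha>))) (at x)"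
      unfolding Fp_def using pos G by (auto intro!: derivative_eq_intros)
    moreover have "- ((1-\<alpha>) * (c-x) powr ((1-\<alpha>) - 1) * (-1)) / ((1-\<alpha>) * Gamma (1-\<alpha>)) = omega (1-\<alpha>) (c - x)"
    proof -
      have "1 - \<alpha> \<noteq> 0" using assms by simp
      then show ?thesis unfolding omega_def using G by (simp add: field_simps)
    qed
    ultimately show ?thesis by (simp add: has_real_derivative_iff_has_vector_derivative)
  qed
  have "((\<lambda>s. omega (1-\<alpha>) (c - s)) has_integral (Fp B - Fp A)) {A..B}"
    by (rule fundamental_theorem_of_calculus_interior[OF assms(1) cont der])
  then show ?thesis unfolding Fp_def by (simp add: integral_unique diff_divide_distrib)
qed

definition sl :: "real \<Rightarrow> real \<Rightarrow> real \<Rightarrow> real" where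
  "sl \<beta> a b = (b powr \<beta> - a powr \<beta>) / (b - a)"

lemma mvt_powr:
  fixes \<beta> x y :: real
  assumes "0 \<le> x" "x < y" "0 < \<beta>" "\<beta> < 1"
  shows "\<exists>z. x < z \<and> z < y \<and> sl \<beta> x y = \<beta> * z powr (\<beta> - 1)"
proof -
  have cont: "continuous_on {x..y} (\<lambda>s. s powr \<beta>)"
    by (rule continuous_on_powr') (use assms in \<open>auto intro!: continuous_intros\<close>)
  have "\<exists>l z. x < z \<and> z < y \<and> DERIV (\<lambda>s. s powr \<beta>) z :> l \<and> y powr \<beta> - x powr \<beta> = (y - x) * l"
    apply (rule MVT[OF assms(2) cont])
    using has_real_derivative_powr assms real_differentiable_def
    by (metis order.strict_trans1)
  then obtain l z where z: "x < z" "z < y" "DERIV (\<lambda>s. s powr \<beta>) z :> l" "y powr \<beta> - x powr \<beta> = (y - x) * l"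
    by blast
  have "l = \<beta> * z powr (\<beta> - 1)"
    using DERIV_unique[OF z(3) has_real_derivative_powr] z assms by auto
  then show ?thesis using z assms unfolding sl_def by (intro exI[of _ z]) (auto simp: field_simps)
qed

lemma three_chord:
  fixes \<beta> x y z :: real
  assumes "0 \<le> x" "x < y" "y < z" "0 < \<beta>" "\<beta> < 1"
  shows "sl \<beta> y z \<le> sl \<beta> x z" "sl \<beta> x z \<le> sl \<beta> x y"
proof -
  obtain u where u: "x < u" "u < y" "sl \<beta> x y = \<beta> * u powr (\<beta> - 1)"
    using mvt_powr[OF assms(1,2,4,5)] by blast
  obtain v where v: "y < v" "v < z" "sl \<beta> y z = \<beta> * v powr (\<beta> - 1)"
    using mvt_powr[of y z] assms by auto
  have "v powr (\<beta> - 1) \<le> u powr (\<beta> - 1)"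
    by (rule powr_mono2') (use assms u v in auto)
  then have le: "sl \<beta> y z \<le> sl \<beta> x y" using u v assms by simp
  have eq: "sl \<beta> x z * (z - x) = sl \<beta> x y * (y - x) + sl \<beta> y z * (z - y)"
  proof -
    have "sl \<beta> x z * (z - x) = z powr \<beta> - x powr \<beta>" "sl \<beta> x y * (y - x) = y powr \<beta> - x powr \<beta>"
      "sl \<beta> y z * (z - y) = z powr \<beta> - y powr \<beta>" using assms unfolding sl_def by auto
    then show ?thesis by simp
  qed
  have "sl \<beta> y z * (z - x) \<le> sl \<beta> x z * (z - x)"
  proof -
    have "sl \<beta> y z * (y - x) \<le> sl \<beta> x y * (y - x)" using le assms by (intro mult_right_mono) auto
    then show ?thesis using eq by (simp add: algebra_simps)
  qed
  then show "sl \<beta> y z \<le> sl \<beta> x z" using assms by simp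
  have "sl \<beta> x z * (z - x) \<le> sl \<beta> x y * (z - x)"
  proof -
    have "sl \<beta> y z * (z - y) \<le> sl \<beta> x y * (z - y)" using le assms by (intro mult_right_mono) auto
    then show ?thesis using eq by (simp add: algebra_simps)
  qed
  then show "sl \<beta> x z \<le> sl \<beta> x y" using assms by simp
qed

lemma sl_mono:
  fixes \<beta> a b a' b' :: real
  assumes "0 \<le> a'" "a' \<le> a" "b' \<le> b" "a' < b'" "a < b" "0 < \<beta>" "\<beta> < 1"
  shows "sl \<beta> a b \<le> sl \<beta> a' b'"
proof -
  have 1: "sl \<beta> a b \<le> sl \<beta> a' b"
  proof (cases "a' = a")
    case False then show ?thesis using three_chord(1)[of a' a b \<beta>] assms by auto
  qed simp
  have 2: "sl \<beta> a' b \<le> sl \<beta> a' b'"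
  proof (cases "b' = b")
    case False then show ?thesis using three_chord(2)[of a' b' b \<beta>] assms by auto
  qed simp
  from 1 2 show ?thesis by linarith
qed

lemma sl_nonneg:
  fixes \<beta> a b :: real
  assumes "0 \<le> a" "a < b" "0 < \<beta>"
  shows "sl \<beta> a b \<ge> 0"
  unfolding sl_def using assms by (auto intro!: divide_nonneg_pos powr_mono2)



lemma amgm: fixes d x y :: real assumes "0 \<le> d" shows "-(d*x*y) \<ge> -(d*x\<^sup>2)/2 - (d*y\<^sup>2)/2"
proof -
  have "0 \<le> d*(x-y)\<^sup>2" using assms by simp
  moreover have "d*(x-y)\<^sup>2 = d*x\<^sup>2 + d*y\<^sup>2 - 2*(d*x*y)" by (simp add: power2_eq_square algebra_simps)
  ultimately show ?thesis by linarith
qed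

lemma termk:
  fixes b w :: "nat \<Rightarrow> real" and k :: nat
  assumes "1 \<le> k" and mono: "\<And>j. 1 \<le> j \<Longrightarrow> j < k \<Longrightarrow> b j \<le> b (j+1)"
  shows "w k * (\<Sum>j=1..k. (if j = k then b k else b j - b (j+1)) * w j)
     \<ge> (1/2) * (b k + b 1) * (w k)\<^sup>2 - (1/2) * (\<Sum>j=1..k-1. (b (j+1) - b j) * (w j)\<^sup>2)"
proof -
  define d where "d j = b (j+1) - b j" for j
  have setk: "{1..k} = insert k {1..k-1}" using assms(1) by auto
  have "(\<Sum>j=1..k. (if j = k then b k else b j - b (j+1)) * w j)
      = b k * w k + (\<Sum>j=1..k-1. (b j - b (j+1)) * w j)"
    unfolding setk by (subst sum.insert) (auto intro!: sum.cong)
  then have e: "w k * (\<Sum>j=1..k. (if j = k then b k else b j - b (j+1)) * w j)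
      = b k * (w k)\<^sup>2 + (\<Sum>j=1..k-1. -(d j * w k * w j))"
    by (simp add: algebra_simps power2_eq_square sum_distrib_left d_def)
  have pt: "-(d j * w k * w j) \<ge> -(d j * (w k)\<^sup>2)/2 - (d j * (w j)\<^sup>2)/2"
    if "j \<in> {1..k-1}" for j
  proof -
    have "d j \<ge> 0" using mono[of j] that by (auto simp: d_def)
    then show ?thesis by (rule amgm)
  qed
  have A: "(\<Sum>j=1..k-1. -(d j * (w k)\<^sup>2)/2 - (d j * (w j)\<^sup>2)/2) \<le> (\<Sum>j=1..k-1. -(d j * w k * w j))"
    by (rule sum_mono) (use pt in auto)
  have B: "(\<Sum>j=1..k-1. -(d j * (w k)\<^sup>2)/2 - (d j * (w j)\<^sup>2)/2)
      = -((\<Sum>j=1..k-1. d j) * (w k)\<^sup>2)/2 - (\<Sum>j=1..k-1. d j * (w j)\<^sup>2)/2"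
    by (simp add: sum_subtractf sum_divide_distrib[symmetric] sum_distrib_right sum_negf)
  have C: "(\<Sum>j=1..k-1. d j) = b k - b 1"
    using sum_Suc_diff[of 1 "k-1" b] assms(1) by (simp add: d_def)
  have D: "(\<Sum>j=1..k-1. (b (j+1) - b j) * (w j)\<^sup>2) = (\<Sum>j=1..k-1. d j * (w j)\<^sup>2)"
    by (simp add: d_def)
  have "b k * (w k)\<^sup>2 + (-((b k - b 1) * (w k)\<^sup>2)/2 - (\<Sum>j=1..k-1. d j * (w j)\<^sup>2)/2)
     \<le> w k * (\<Sum>j=1..k. (if j = k then b k else b j - b (j+1)) * w j)"
    using A B e unfolding C by linarith
  moreover have "b k * (w k)\<^sup>2 + (-((b k - b 1) * (w k)\<^sup>2)/2 - (\<Sum>j=1..k-1. d j * (w j)\<^sup>2)/2)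
     = (1/2) * (b k + b 1) * (w k)\<^sup>2 - (1/2) * (\<Sum>j=1..k-1. d j * (w j)\<^sup>2)"
    by (simp add: field_simps)
  ultimately show ?thesis unfolding D by linarith
qed

lemma main_ind:
  fixes b :: "nat \<Rightarrow> nat \<Rightarrow> real" and w :: "nat \<Rightarrow> real" and N :: nat
  assumes P: "\<And>k j. 1 \<le> j \<Longrightarrow> j \<le> k \<Longrightarrow> k \<le> N \<Longrightarrow> b k j \<ge> 0"
    and Mo: "\<And>k j. 1 \<le> j \<Longrightarrow> j < k \<Longrightarrow> k \<le> N \<Longrightarrow> b k j \<le> b k (j+1)"
    and M: "\<And>k j. 1 \<le> j \<Longrightarrow> j \<le> k \<Longrightarrow> k+1 \<le> N \<Longrightarrow> b (k+1) (j+1) \<le> b k j"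
  shows "n \<le> N \<Longrightarrow> (\<Sum>k=1..n. w k * (\<Sum>j=1..k. (if j = k then b k k else b k j - b k (j+1)) * w j))
     \<ge> (1/2) * (\<Sum>j=1..n-1. (b j j - b (j+1) (j+1)) * (w j)\<^sup>2) + (1/2) * (\<Sum>j=1..n. b n j * (w j)\<^sup>2)"
proof (induction n)
  case 0
  then show ?case by simp
next
  case (Suc n)
  define m where "m = Suc n"
  have IH: "(\<Sum>k=1..n. w k * (\<Sum>j=1..k. (if j = k then b k k else b k j - b k (j+1)) * w j))
     \<ge> (1/2) * (\<Sum>j=1..n-1. (b j j - b (j+1) (j+1)) * (w j)\<^sup>2) + (1/2) * (\<Sum>j=1..n. b n j * (w j)\<^sup>2)"
    using Suc by simp
  have T: "w m * (\<Sum>j=1..m. (if j = m then b m m else b m j - b m (j+1)) * w j)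
     \<ge> (1/2) * (b m m + b m 1) * (w m)\<^sup>2 - (1/2) * (\<Sum>j=1..n. (b m (j+1) - b m j) * (w j)\<^sup>2)"
    using termk[of m "b m" w] Mo[of _ m] Suc.prems unfolding m_def by auto
  have split: "(\<Sum>k=1..m. w k * (\<Sum>j=1..k. (if j = k then b k k else b k j - b k (j+1)) * w j))
     = (\<Sum>k=1..n. w k * (\<Sum>j=1..k. (if j = k then b k k else b k j - b k (j+1)) * w j))
       + w m * (\<Sum>j=1..m. (if j = m then b m m else b m j - b m (j+1)) * w j)"
    unfolding m_def by simp
  have bm1: "b m 1 \<ge> 0" using P[of 1 m] Suc.prems unfolding m_def by auto
  show ?case
  proof (cases "n = 0")
    case True
    have "0 \<le> b 1 1 * (w 1)\<^sup>2" using P[of 1 1] Suc.prems by simp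
    then show ?thesis using T split bm1 True unfolding m_def by (simp add: algebra_simps power2_eq_square)
  next
    case False
    have s1: "(\<Sum>j=1..m-1. (b j j - b (j+1) (j+1)) * (w j)\<^sup>2)
        = (\<Sum>j=1..n-1. (b j j - b (j+1) (j+1)) * (w j)\<^sup>2) + (b n n - b m m) * (w n)\<^sup>2"
    proof -
      show ?thesis unfolding m_def using False by (cases n) auto
    qed
    have s2: "(\<Sum>j=1..m. b m j * (w j)\<^sup>2) = (\<Sum>j=1..n. b m j * (w j)\<^sup>2) + b m m * (w m)\<^sup>2"
      unfolding m_def by simp
    have X: "(\<Sum>j=1..n. b n j * (w j)\<^sup>2) - (\<Sum>j=1..n. (b m (j+1) - b m j) * (w j)\<^sup>2)
        - (\<Sum>j=1..n. b m j * (w j)\<^sup>2) = (\<Sum>j=1..n. (b n j - b m (j+1)) * (w j)\<^sup>2)"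
      by (simp add: sum_subtractf[symmetric] algebra_simps)
    have Y: "(\<Sum>j=1..n. (b n j - b m (j+1)) * (w j)\<^sup>2)
       = (\<Sum>j=1..n-1. (b n j - b m (j+1)) * (w j)\<^sup>2) + (b n n - b m m) * (w n)\<^sup>2"
    proof -
      show ?thesis unfolding m_def using False by (cases n) auto
    qed
    have Z: "(\<Sum>j=1..n-1. (b n j - b m (j+1)) * (w j)\<^sup>2) \<ge> 0"
    proof (rule sum_nonneg)
      fix j assume "j \<in> {1..n-1}"
      then have "b m (j+1) \<le> b n j" using M[of j n] Suc.prems unfolding m_def by auto
      then show "0 \<le> (b n j - b m (j+1)) * (w j)\<^sup>2" by simp
    qed
    have "0 \<le> b m 1 * (w m)\<^sup>2" using bm1 by simp
    moreover have "(1/2) * (b m m + b m 1) * (w m)\<^sup>2 = (1/2) * (b m m * (w m)\<^sup>2) + (1/2) * (b m 1 * (w m)\<^sup>2)"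
      by (simp add: algebra_simps)
    ultimately show ?thesis using IH T split s1 s2 X Y Z unfolding m_def[symmetric]
      by linarith
  qed
qed



lemma tmid_diff: "1 \<le> m \<Longrightarrow> tmid t m - tmid t (m-1) = tauh t m"
  unfolding tmid_def tauh_def tau_def
  by (cases "m = 1") (auto simp: field_simps)

locale mesh =
  fixes t :: "nat \<Rightarrow> real" and N :: nat
  assumes inc: "\<And>m. 1 \<le> m \<Longrightarrow> m \<le> N \<Longrightarrow> t (m - 1) < t m"
    and tmon: "\<And>m. 2 \<le> m \<Longrightarrow> m \<le> N \<Longrightarrow> tau t (m - 1) \<le> tau t m"
begin

lemma tau_pos: "1 \<le> m \<Longrightarrow> m \<le> N \<Longrightarrow> tau t m > 0"
  using inc unfolding tau_def by force

lemma tauh_pos: assumes "1 \<le> m" "m \<le> N" shows "tauh t m > 0"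
proof (cases "m = 1")
  case True then show ?thesis unfolding tauh_def using tau_pos[of 1] assms by auto
next
  case False
  then have "1 \<le> m - 1" using assms by auto
  moreover have "m - 1 \<le> N" using assms by auto
  ultimately have "tau t (m-1) > 0" using tau_pos by blast
  then show ?thesis unfolding tauh_def using tau_pos[of m] assms False by auto
qed

lemma tauh_step: "1 \<le> m \<Longrightarrow> m + 1 \<le> N \<Longrightarrow> tauh t m \<le> tauh t (m+1)"
  unfolding tauh_def using tau_pos[of "Suc (Suc 0)"] tmon[of "m+1"] tmon[of m] by auto

lemma tauh_mono: "1 \<le> i \<Longrightarrow> i \<le> j \<Longrightarrow> j \<le> N \<Longrightarrow> tauh t i \<le> tauh t j"
proof (induction j)
  case 0 then show ?case by simp
next
  case (Suc j)
  show ?case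
  proof (cases "i = Suc j")
    case False
    then have "tauh t i \<le> tauh t j" using Suc by auto
    also have "\<dots> \<le> tauh t (Suc j)" using tauh_step[of j] Suc False by auto
    finally show ?thesis .
  qed simp
qed

lemma tmid_mono: "i \<le> j \<Longrightarrow> j \<le> N \<Longrightarrow> tmid t i \<le> tmid t j"
proof (induction j)
  case 0 then show ?case by simp
next
  case (Suc j)
  show ?case
  proof (cases "i = Suc j")
    case False
    then have "tmid t i \<le> tmid t j" using Suc by auto
    also have "\<dots> \<le> tmid t (Suc j)" using tmid_diff[of "Suc j" t] tauh_pos[of "Suc j"] Suc by auto
    finally show ?thesis .
  qed simp
qed

lemma acoef_sl:
  assumes "0 < \<alpha>" "\<alpha> < 1" "1 \<le> k" "k \<le> n" "n \<le> N"
  shows "acoef \<alpha> t n k = (1 / ((1-\<alpha>) * Gamma (1-\<alpha>))) * sl (1-\<alpha>) (tmid t n - tmid t k) (tmid t n - tmid t (k-1))"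
proof -
  have h: "tmid t k - tmid t (k-1) = tauh t k" using tmid_diff assms by auto
  have p: "tauh t k > 0" using tauh_pos assms by auto
  have "tmid t k \<le> tmid t n" using tmid_mono assms by auto
  then have "integral {tmid t (k - 1)..tmid t k} (\<lambda>s. omega (1 - \<alpha>) (tmid t n - s))
     = ((tmid t n - tmid t (k-1)) powr (1-\<alpha>) - (tmid t n - tmid t k) powr (1-\<alpha>)) / ((1-\<alpha>) * Gamma (1-\<alpha>))"
    using int_formula[of "tmid t (k-1)" "tmid t k" "tmid t n" \<alpha>] h p assms by auto
  moreover have "(tmid t n - tmid t (k-1)) - (tmid t n - tmid t k) = tauh t k" using h by simp
  ultimately show ?thesis unfolding acoef_def sl_def by simp
qed


lemma Pa: assumes "0 < \<alpha>" "\<alpha> < 1" "1 \<le> j" "j \<le> k" "k \<le> N"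
  shows "acoef \<alpha> t k j \<ge> 0"
proof -
  have G: "1 / ((1-\<alpha>) * Gamma (1-\<alpha>)) > 0" using assms by simp
  have "sl (1-\<alpha>) (tmid t k - tmid t j) (tmid t k - tmid t (j-1)) \<ge> 0"
    apply (rule sl_nonneg)
    using tmid_mono[of j k] tmid_diff[of j t] tauh_pos[of j] assms by auto
  then show ?thesis using acoef_sl[of \<alpha> j k] assms G by simp
qed

lemma Moa: assumes "0 < \<alpha>" "\<alpha> < 1" "1 \<le> j" "j < k" "k \<le> N"
  shows "acoef \<alpha> t k j \<le> acoef \<alpha> t k (j+1)"
proof -
  have G: "1 / ((1-\<alpha>) * Gamma (1-\<alpha>)) > 0" using assms by simp
  have d1: "tmid t (j+1) - tmid t j = tauh t (j+1)" using tmid_diff[of "j+1" t] by simp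
  have d2: "tmid t j - tmid t (j-1) = tauh t j" using tmid_diff[of j t] assms by simp
  have "sl (1-\<alpha>) (tmid t k - tmid t j) (tmid t k - tmid t (j-1))
     \<le> sl (1-\<alpha>) (tmid t k - tmid t (j+1)) (tmid t k - tmid t j)"
    apply (rule sl_mono)
    using tmid_mono[of "j+1" k] d1 d2 tauh_pos[of j] tauh_pos[of "j+1"] assms by auto
  then show ?thesis using acoef_sl[of \<alpha> j k] acoef_sl[of \<alpha> "j+1" k] assms G
    by (simp add: divide_right_mono)
qed

lemma Ma: assumes "0 < \<alpha>" "\<alpha> < 1" "1 \<le> j" "j \<le> k" "k + 1 \<le> N"
  shows "acoef \<alpha> t (k+1) (j+1) \<le> acoef \<alpha> t k j"
proof -
  have G: "1 / ((1-\<alpha>) * Gamma (1-\<alpha>)) > 0" using assms by simp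
  have d1: "tmid t (j+1) - tmid t j = tauh t (j+1)" using tmid_diff[of "j+1" t] by simp
  have d2: "tmid t j - tmid t (j-1) = tauh t j" using tmid_diff[of j t] assms by simp
  have d3: "tmid t (k+1) - tmid t k = tauh t (k+1)" using tmid_diff[of "k+1" t] by simp
  have m1: "tauh t (j+1) \<le> tauh t (k+1)" using tauh_mono[of "j+1" "k+1"] assms by auto
  have m2: "tauh t j \<le> tauh t (k+1)" using tauh_mono[of j "k+1"] assms by auto
  have "sl (1-\<alpha>) (tmid t (k+1) - tmid t (j+1)) (tmid t (k+1) - tmid t j)
     \<le> sl (1-\<alpha>) (tmid t k - tmid t j) (tmid t k - tmid t (j-1))"
    apply (rule sl_mono)
    using tmid_mono[of j k] d1 d2 d3 m1 m2 tauh_pos[of j] tauh_pos[of "j+1"] assms by auto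
  then show ?thesis using acoef_sl[of \<alpha> j k] acoef_sl[of \<alpha> "j+1" "k+1"] assms G
    by (simp add: divide_right_mono)
qed

end

theorem mainTheorem4:
  fixes T \<alpha> :: real and N n :: nat and t w :: "nat \<Rightarrow> real"
  assumes "T > 0" and "0 < \<alpha>" and "\<alpha> < 1"
    and "t 0 = 0" and "t N = T"
    and "\<And>m. 1 \<le> m \<Longrightarrow> m \<le> N \<Longrightarrow> t (m - 1) < t m"
    and "\<And>m. 2 \<le> m \<Longrightarrow> m \<le> N \<Longrightarrow> tau t (m - 1) \<le> tau t m"
    and "1 \<le> n" and "n \<le> N"
  shows "(\<Sum>k=1..n. w k * (\<Sum>j=1..k. zeta \<alpha> t k j * w j))
           \<ge> (1/2) * (\<Sum>k=1..n-1. (acoef \<alpha> t k k - acoef \<alpha> t (k+1) (k+1)) * (w k)\<^sup>2)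
       \<and> (1/2) * (\<Sum>k=1..n-1. (acoef \<alpha> t k k - acoef \<alpha> t (k+1) (k+1)) * (w k)\<^sup>2) \<ge> 0"
proof -
  interpret mesh t N using assms(6,7) by unfold_locales auto
  let ?b = "\<lambda>k j. acoef \<alpha> t k j"
  have I: "(\<Sum>k=1..n. w k * (\<Sum>j=1..k. (if j = k then ?b k k else ?b k j - ?b k (j+1)) * w j))
     \<ge> (1/2) * (\<Sum>j=1..n-1. (?b j j - ?b (j+1) (j+1)) * (w j)\<^sup>2) + (1/2) * (\<Sum>j=1..n. ?b n j * (w j)\<^sup>2)"
    by (rule main_ind[where N=N]) (use Pa Moa Ma assms in auto)
  have Z: "zeta \<alpha> t k j = (if j = k then ?b k k else ?b k j - ?b k (j+1))" for k j
    unfolding zeta_def by simp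
  have S2: "(\<Sum>j=1..n. ?b n j * (w j)\<^sup>2) \<ge> 0"
    by (rule sum_nonneg) (use Pa assms in auto)
  have S1: "(\<Sum>k=1..n-1. (acoef \<alpha> t k k - acoef \<alpha> t (k+1) (k+1)) * (w k)\<^sup>2) \<ge> 0"
  proof (rule sum_nonneg)
    fix k assume "k \<in> {1..n-1}"
    then have "acoef \<alpha> t (k+1) (k+1) \<le> acoef \<alpha> t k k" using Ma[of \<alpha> k k] assms by auto
    then show "0 \<le> (acoef \<alpha> t k k - acoef \<alpha> t (k+1) (k+1)) * (w k)\<^sup>2" by simp
  qed
  show ?thesis using I S1 S2 unfolding Z by auto
qed

end
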